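(* Let $Q\subset\mathbb R^2$ be an $\mathbb R$-unimodular copy of the unit square $[0,1]^2$, and let $P\subset\mathbb R^2$ be a parallelogram such that the relative interior of each of the four facets of $P$ contains exactly one vertex of $Q$ (distinct facets containing distinct vertices). Then $P$ is $\mathbb R$-$\Delta_2$-free and inclusion-maximal among $\mathbb R$-$\Delta_2$-free convex sets.
   Context: $\Delta_2=\mathrm{conv}(\mathbf 0,e_1,e_2)$. An $\mathbb R$-unimodular copy of $X$ is $T(X)$ where $T(x)=Mx+b$, $M\in\mathrm{GL}_2(\mathbb Z)$, $b\in\mathbb R^2$. A convex set is $\mathbb R$-$\Delta_2$-free if its relative interior contains no $\mathbb R$-unimodular copy of $\Delta_2$. *)

theory Defs
  imports "HOL-Analysis.Analysis"
begin

definition R_unimodular_map :: "(real^2 \<Rightarrow> real^2) \<Rightarrow> bool" where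
  "R_unimodular_map T \<longleftrightarrow>
     (\<exists>(M::real^2^2) b. (\<forall>i j. M$i$j \<in> \<int>) \<and> \<bar>det M\<bar> = 1 \<and> T = (\<lambda>x. M *v x + b))"

definition Delta2 :: "(real^2) set" where
  "Delta2 = convex hull {0, axis 1 1, axis 2 1}"

definition unit_square :: "(real^2) set" where
  "unit_square = cbox 0 1"

definition R_Delta2_free :: "(real^2) set \<Rightarrow> bool" where
  "R_Delta2_free K \<longleftrightarrow> convex K \<and>
     \<not> (\<exists>T. R_unimodular_map T \<and> T ` Delta2 \<subseteq> rel_interior K)"

definition maximal_R_Delta2_free :: "(real^2) set \<Rightarrow> bool" where
  "maximal_R_Delta2_free K \<longleftrightarrow> R_Delta2_free K \<and>
     (\<forall>L. R_Delta2_free L \<and> K \<subseteq> L \<longrightarrow> L = K)"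

definition parallelogram :: "(real^2) set \<Rightarrow> bool" where
  "parallelogram P \<longleftrightarrow> (\<exists>a u v. u$1 * v$2 - u$2 * v$1 \<noteq> 0 \<and>
      P = convex hull {a, a + u, a + u + v, a + v})"

end

theory Submission
  imports Defs
begin


definition cr :: "real^2 \<Rightarrow> real^2 \<Rightarrow> real" where "cr p q = p$1*q$2 - p$2*q$1"
definition sg :: "real^2 \<Rightarrow> real^2 \<Rightarrow> real^2 \<Rightarrow> real^2 \<Rightarrow> real" where
  "sg a u v x = cr (x - a) v / cr u v"
definition tu :: "real^2 \<Rightarrow> real^2 \<Rightarrow> real^2 \<Rightarrow> real^2 \<Rightarrow> real" where
  "tu a u v x = cr u (x - a) / cr u v"
definition box2 where "box2 a u v = {x. 0 \<le> sg a u v x \<and> sg a u v x \<le> 1 \<and> 0 \<le> tu a u v x \<and> tu a u v x \<le> 1}"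

lemma recon_aux: fixes a1 x1 x2 a2 u1 u2 v1 v2 :: real
  assumes "u1 * v2 - u2 * v1 \<noteq> 0"
  shows "a1 + ((x1 - a1) * v2 - (x2 - a2) * v1) / (u1 * v2 - u2 * v1) * u1 + (u1 * (x2 - a2) - u2 * (x1 - a1)) / (u1 * v2 - u2 * v1) * v1 = x1"
    and "a2 + ((x1 - a1) * v2 - (x2 - a2) * v1) / (u1 * v2 - u2 * v1) * u2 + (u1 * (x2 - a2) - u2 * (x1 - a1)) / (u1 * v2 - u2 * v1) * v2 = x2"
proof -
  let ?D = "u1 * v2 - u2 * v1"
  have "((x1 - a1) * v2 - (x2 - a2) * v1) / ?D * u1 + (u1 * (x2 - a2) - u2 * (x1 - a1)) / ?D * v1
     = (((x1 - a1) * v2 - (x2 - a2) * v1) * u1 + (u1 * (x2 - a2) - u2 * (x1 - a1)) * v1) / ?D"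
    by (simp add: add_divide_distrib)
  also have "\<dots> = ((x1 - a1) * ?D) / ?D" by (rule arg_cong[where f="\<lambda>t. t / ?D"]) algebra
  also have "\<dots> = x1 - a1" using assms by simp
  finally show "a1 + ((x1 - a1) * v2 - (x2 - a2) * v1) / (u1 * v2 - u2 * v1) * u1 + (u1 * (x2 - a2) - u2 * (x1 - a1)) / (u1 * v2 - u2 * v1) * v1 = x1" by simp
  have "((x1 - a1) * v2 - (x2 - a2) * v1) / ?D * u2 + (u1 * (x2 - a2) - u2 * (x1 - a1)) / ?D * v2
     = (((x1 - a1) * v2 - (x2 - a2) * v1) * u2 + (u1 * (x2 - a2) - u2 * (x1 - a1)) * v2) / ?D"
    by (simp add: add_divide_distrib)
  also have "\<dots> = ((x2 - a2) * ?D) / ?D" by (rule arg_cong[where f="\<lambda>t. t / ?D"]) algebra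
  also have "\<dots> = x2 - a2" using assms by simp
  finally show "a2 + ((x1 - a1) * v2 - (x2 - a2) * v1) / (u1 * v2 - u2 * v1) * u2 + (u1 * (x2 - a2) - u2 * (x1 - a1)) / (u1 * v2 - u2 * v1) * v2 = x2" by simp
qed

lemma recon: assumes "cr u v \<noteq> 0" shows "a + sg a u v x *\<^sub>R u + tu a u v x *\<^sub>R v = x"
  using assms recon_aux(1)[of "u$1" "v$2" "u$2" "v$1" "a$1" "x$1" "x$2" "a$2"] recon_aux(2)[of "u$1" "v$2" "u$2" "v$1" "a$2" "x$1" "a$1" "x$2"]
  unfolding vec_eq_iff forall_2 sg_def tu_def cr_def by simp

lemma cr_comb: "p + q = 1 \<Longrightarrow> cr (p *\<^sub>R x + q *\<^sub>R y - a) v = p * cr (x - a) v + q * cr (y - a) v"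
proof -
  assume "p + q = 1" then have q: "q = 1 - p" by simp
  show ?thesis unfolding cr_def q by (simp add: algebra_simps)
qed
lemma cr_comb2: "p + q = 1 \<Longrightarrow> cr u (p *\<^sub>R x + q *\<^sub>R y - a) = p * cr u (x - a) + q * cr u (y - a)"
proof -
  assume "p + q = 1" then have q: "q = 1 - p" by simp
  show ?thesis unfolding cr_def q by (simp add: algebra_simps)
qed
lemma cr_add3: "cr (x + y - z - a) v = cr (x - a) v + cr (y - a) v - cr (z - a) v"
  unfolding cr_def by (simp add: algebra_simps)
lemma cr_add3b: "cr u (x + y - z - a) = cr u (x - a) + cr u (y - a) - cr u (z - a)"
  unfolding cr_def by (simp add: algebra_simps)

lemma sg_comb: assumes "p + q = 1" shows "sg a u v (p *\<^sub>R x + q *\<^sub>R y) = p * sg a u v x + q * sg a u v y"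
  unfolding sg_def cr_comb[OF assms] by (simp add: add_divide_distrib)
lemma tu_comb: assumes "p + q = 1" shows "tu a u v (p *\<^sub>R x + q *\<^sub>R y) = p * tu a u v x + q * tu a u v y"
  unfolding tu_def cr_comb2[OF assms] by (simp add: add_divide_distrib)
lemma sg_add3: "sg a u v (x + y - z) = sg a u v x + sg a u v y - sg a u v z"
  unfolding sg_def using cr_add3[of x y z a v] by (simp add: add_divide_distrib diff_divide_distrib)
lemma tu_add3: "tu a u v (x + y - z) = tu a u v x + tu a u v y - tu a u v z"
  unfolding tu_def using cr_add3b[of u x y z a] by (simp add: add_divide_distrib diff_divide_distrib)
lemma sg_pt: "cr u v \<noteq> 0 \<Longrightarrow> sg a u v (a + s *\<^sub>R u + t *\<^sub>R v) = s"
proof -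
  assume "cr u v \<noteq> 0"
  have "cr (a + s *\<^sub>R u + t *\<^sub>R v - a) v = s * cr u v" unfolding cr_def by (simp add: algebra_simps)
  then show ?thesis unfolding sg_def using \<open>cr u v \<noteq> 0\<close> by simp
qed
lemma tu_pt: "cr u v \<noteq> 0 \<Longrightarrow> tu a u v (a + s *\<^sub>R u + t *\<^sub>R v) = t"
proof -
  assume "cr u v \<noteq> 0"
  have "cr u (a + s *\<^sub>R u + t *\<^sub>R v - a) = t * cr u v" unfolding cr_def by (simp add: algebra_simps)
  then show ?thesis unfolding tu_def using \<open>cr u v \<noteq> 0\<close> by simp
qed

lemma sg_tu_trans: "sg a u v (x + y) = sg a u v x + cr y v / cr u v" "tu a u v (x + y) = tu a u v x + cr u y / cr u v"
  unfolding sg_def tu_def cr_def by (simp_all add: algebra_simps add_divide_distrib[symmetric])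

lemma box2_convex: "convex (box2 a u v)"
  unfolding convex_def box2_def
proof (intro ballI allI impI, safe)
  fix x y :: "real^2" and p q :: real
  assume h: "0 \<le> p" "0 \<le> q" "p + q = 1" "0 \<le> sg a u v x" "sg a u v x \<le> 1" "0 \<le> tu a u v x" "tu a u v x \<le> 1"
    "0 \<le> sg a u v y" "sg a u v y \<le> 1" "0 \<le> tu a u v y" "tu a u v y \<le> 1"
  show "0 \<le> sg a u v (p *\<^sub>R x + q *\<^sub>R y)" "0 \<le> tu a u v (p *\<^sub>R x + q *\<^sub>R y)"
    using h by (simp_all add: sg_comb tu_comb)
  show "sg a u v (p *\<^sub>R x + q *\<^sub>R y) \<le> 1" "tu a u v (p *\<^sub>R x + q *\<^sub>R y) \<le> 1"
    using h by (simp_all add: sg_comb tu_comb convex_bound_le)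
qed

lemma sg_tu_corners: assumes "cr u v \<noteq> 0"
  shows "sg a u v a = 0" "tu a u v a = 0" "sg a u v (a + u) = 1" "tu a u v (a + u) = 0"
    "sg a u v (a + u + v) = 1" "tu a u v (a + u + v) = 1" "sg a u v (a + v) = 0" "tu a u v (a + v) = 1"
  using sg_pt[OF assms, of a 0 0] tu_pt[OF assms, of a 0 0] sg_pt[OF assms, of a 1 0] tu_pt[OF assms, of a 1 0]
    sg_pt[OF assms, of a 1 1] tu_pt[OF assms, of a 1 1] sg_pt[OF assms, of a 0 1] tu_pt[OF assms, of a 0 1]
  by simp_all

lemma hull_box2: assumes "cr u v \<noteq> 0"
  shows "convex hull {a, a + u, a + u + v, a + v} = box2 a u v"
proof
  show "convex hull {a, a + u, a + u + v, a + v} \<subseteq> box2 a u v"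
    apply (rule hull_minimal) using sg_tu_corners[OF assms] apply (simp add: box2_def) by (rule box2_convex)
next
  show "box2 a u v \<subseteq> convex hull {a, a + u, a + u + v, a + v}"
  proof
    fix x assume "x \<in> box2 a u v"
    then have s: "0 \<le> sg a u v x" "sg a u v x \<le> 1" "0 \<le> tu a u v x" "tu a u v x \<le> 1" by (auto simp: box2_def)
    define s t where "s = sg a u v x" and "t = tu a u v x"
    let ?H = "convex hull {a, a + u, a + u + v, a + v}"
    have c: "convex ?H" by simp
    have p1: "(1 - s) *\<^sub>R a + s *\<^sub>R (a + u) \<in> ?H"
      by (rule convexD[OF c]) (use s s_def in \<open>auto intro: hull_inc\<close>)
    have p2: "(1 - s) *\<^sub>R (a + v) + s *\<^sub>R (a + u + v) \<in> ?H"
      by (rule convexD[OF c]) (use s s_def in \<open>auto intro: hull_inc\<close>)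
    have "(1 - t) *\<^sub>R ((1 - s) *\<^sub>R a + s *\<^sub>R (a + u)) + t *\<^sub>R ((1 - s) *\<^sub>R (a + v) + s *\<^sub>R (a + u + v)) \<in> ?H"
      by (rule convexD[OF c p1 p2]) (use s t_def in auto)
    moreover have "(1 - t) *\<^sub>R ((1 - s) *\<^sub>R a + s *\<^sub>R (a + u)) + t *\<^sub>R ((1 - s) *\<^sub>R (a + v) + s *\<^sub>R (a + u + v)) = a + s *\<^sub>R u + t *\<^sub>R v"
      by (simp add: algebra_simps)
    moreover have "a + s *\<^sub>R u + t *\<^sub>R v = x" using recon[OF assms] s_def t_def by simp
    ultimately show "x \<in> ?H" by simp
  qed
qed

lemma cr_neg: "cr (-u) v = - cr u v" "cr u (-v) = - cr u v" "cr v u = - cr u v" "cr u u = 0"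
  unfolding cr_def by simp_all

lemma reparam1: "cr u v \<noteq> 0 \<Longrightarrow> sg (a + u) (-u) v x = 1 - sg a u v x"
  "tu (a + u) (-u) v x = tu a u v x"
proof -
  have e1: "cr (x - (a + u)) v = cr (x - a) v - cr u v" and e2: "cr (-u) (x - (a + u)) = - cr u (x - a)"
    and e3: "cr (-u) v = - cr u v" unfolding cr_def by (simp_all add: algebra_simps)
  show "cr u v \<noteq> 0 \<Longrightarrow> sg (a + u) (-u) v x = 1 - sg a u v x" unfolding sg_def e1 e3
    by (simp add: field_simps)
  show "tu (a + u) (-u) v x = tu a u v x" unfolding tu_def e2 e3 by simp
qed

lemma reparam2: "sg a v u x = tu a u v x" "tu a v u x = sg a u v x"
proof -
  have e1: "cr (x - a) u = - cr u (x - a)" and e2: "cr v (x - a) = - cr (x - a) v"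
    and e3: "cr v u = - cr u v" unfolding cr_def by (simp_all add: algebra_simps)
  show "sg a v u x = tu a u v x" unfolding sg_def tu_def e1 e3 by simp
  show "tu a v u x = sg a u v x" unfolding sg_def tu_def e2 e3 by simp
qed

lemma reparam3: "cr u v \<noteq> 0 \<Longrightarrow> sg (a + v) (-v) u x = 1 - tu a u v x"
  "tu (a + v) (-v) u x = sg a u v x"
proof -
  have e1: "cr (x - (a + v)) u = cr u v - cr u (x - a)" and e2: "cr (-v) (x - (a + v)) = cr (x - a) v"
    and e3: "cr (-v) u = cr u v" unfolding cr_def by (simp_all add: algebra_simps)
  show "cr u v \<noteq> 0 \<Longrightarrow> sg (a + v) (-v) u x = 1 - tu a u v x" unfolding sg_def tu_def e1 e3
    by (simp add: field_simps)
  show "tu (a + v) (-v) u x = sg a u v x" unfolding tu_def sg_def e2 e3 by simp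
qed

lemma cr_reparams: "cr (-u) v = - cr u v" "cr v u = - cr u v" "cr (-v) u = cr u v"
  unfolding cr_def by simp_all

lemma box2_reparams: assumes "cr u v \<noteq> 0"
  shows "box2 (a + u) (-u) v = box2 a u v" "box2 a v u = box2 a u v" "box2 (a + v) (-v) u = box2 a u v"
proof -
  show "box2 (a + u) (-u) v = box2 a u v" unfolding box2_def reparam1(1)[OF assms] reparam1(2) by auto
  have "sg a v u x = tu a u v x \<and> tu a v u x = sg a u v x" for x using reparam2 by blast
  then show "box2 a v u = box2 a u v" unfolding box2_def by auto
  show "box2 (a + v) (-v) u = box2 a u v" unfolding box2_def reparam3(1)[OF assms] reparam3(2) by auto
qed


lemma sg_cont: "continuous_on UNIV (sg a u v)" and tu_cont: "continuous_on UNIV (tu a u v)"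
  unfolding sg_def tu_def cr_def divide_inverse by (intro continuous_intros)+

definition obox2 where "obox2 a u v = {x. 0 < sg a u v x \<and> sg a u v x < 1 \<and> 0 < tu a u v x \<and> tu a u v x < 1}"

lemma open_obox2: "open (obox2 a u v)"
proof -
  have "obox2 a u v = {x. (\<lambda>_. 0) x < sg a u v x} \<inter> {x. sg a u v x < (\<lambda>_. 1) x} \<inter> {x. (\<lambda>_. 0) x < tu a u v x} \<inter> {x. tu a u v x < (\<lambda>_. 1) x}"
    unfolding obox2_def by auto
  moreover have "open \<dots>"
    by (intro open_Int open_Collect_less sg_cont tu_cont continuous_on_const)
  ultimately show ?thesis by simp
qed

lemma obox2_interior: "obox2 a u v \<subseteq> interior (box2 a u v)"
  by (rule interior_maximal) (auto simp: obox2_def box2_def intro: open_obox2[unfolded obox2_def])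

lemma int_pos: assumes "cr u v \<noteq> 0" "x \<in> interior (box2 a u v)" shows "0 < sg a u v x"
proof -
  obtain e where e: "e > 0" "ball x e \<subseteq> box2 a u v" using assms(2) by (meson mem_interior)
  have u: "u \<noteq> 0" using assms(1) unfolding cr_def by auto
  define d where "d = e / (2 * norm u)"
  have d: "d > 0" using e u by (simp add: d_def)
  have "dist x (x + (- d) *\<^sub>R u) = d * norm u" using d by (simp add: dist_norm)
  also have "\<dots> = e / 2" using u by (simp add: d_def)
  finally have "x + (- d) *\<^sub>R u \<in> box2 a u v" using e by auto
  then have "0 \<le> sg a u v (x + (- d) *\<^sub>R u)" by (simp add: box2_def)
  also have "sg a u v (x + (- d) *\<^sub>R u) = sg a u v x - d"
  proof -
    have "cr ((- d) *\<^sub>R u) v = - d * cr u v" unfolding cr_def by (simp add: algebra_simps)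
    then show ?thesis unfolding sg_tu_trans using assms(1) by simp
  qed
  finally show ?thesis using d by simp
qed




lemma interior_box2: assumes "cr u v \<noteq> 0" shows "interior (box2 a u v) = obox2 a u v"
proof
  show "obox2 a u v \<subseteq> interior (box2 a u v)" by (rule obox2_interior)
  show "interior (box2 a u v) \<subseteq> obox2 a u v"
  proof
    fix x assume x: "x \<in> interior (box2 a u v)"
    have c1: "cr (-u) v \<noteq> 0" "cr v u \<noteq> 0" "cr (-v) u \<noteq> 0" using assms unfolding cr_def by (simp_all add: algebra_simps)
    have br: "box2 (a + u) (-u) v = box2 a u v" "box2 a v u = box2 a u v" "box2 (a + v) (-v) u = box2 a u v"
      using box2_reparams[OF assms] by blast+
    have i1: "0 < sg a u v x" using int_pos[OF assms x] .
    have "x \<in> interior (box2 (a + u) (-u) v)" using x br by (simp only:)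
    then have "0 < sg (a + u) (-u) v x" by (rule int_pos[OF c1(1)])
    then have i2: "sg a u v x < 1" unfolding reparam1(1)[OF assms] by simp
    have "x \<in> interior (box2 a v u)" using x br by (simp only:)
    then have "0 < sg a v u x" by (rule int_pos[OF c1(2)])
    then have i3: "0 < tu a u v x" unfolding reparam2(1) .
    have "x \<in> interior (box2 (a + v) (-v) u)" using x br by (simp only:)
    then have "0 < sg (a + v) (-v) u x" by (rule int_pos[OF c1(3)])
    then have i4: "tu a u v x < 1" unfolding reparam3(1)[OF assms] by simp
    show "x \<in> obox2 a u v" unfolding obox2_def using i1 i2 i3 i4 by blast
  qed
qed

lemma obox2_ne: assumes "cr u v \<noteq> 0" shows "a + (1/2) *\<^sub>R u + (1/2) *\<^sub>R v \<in> obox2 a u v"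
  unfolding obox2_def using sg_pt[OF assms] tu_pt[OF assms] by simp

lemma rel_interior_box2: assumes "cr u v \<noteq> 0" shows "rel_interior (box2 a u v) = obox2 a u v"
  using rel_interior_nonempty_interior[of "box2 a u v"] interior_box2[OF assms] obox2_ne[OF assms] by auto

lemma aff_dim_box2: assumes "cr u v \<noteq> 0" shows "aff_dim (box2 a u v) = 2"
  using aff_dim_nonempty_interior[of "box2 a u v"] interior_box2[OF assms] obox2_ne[OF assms] by auto

lemma facet0: assumes "cr u v \<noteq> 0"
  shows "closed_segment a (a + v) facet_of (box2 a u v)"
    and "\<forall>x \<in> rel_interior (closed_segment a (a + v)). sg a u v x = 0 \<and> 0 < tu a u v x \<and> tu a u v x < 1"
proof -
  have v: "v \<noteq> 0" using assms unfolding cr_def by auto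
  have seg: "closed_segment a (a + v) = {x \<in> box2 a u v. sg a u v x = 0}"
  proof (intro set_eqI iffI)
    fix x assume "x \<in> closed_segment a (a + v)"
    then obtain t where t: "0 \<le> t" "t \<le> 1" "x = (1 - t) *\<^sub>R a + t *\<^sub>R (a + v)" by (auto simp: in_segment)
    then have "x = a + 0 *\<^sub>R u + t *\<^sub>R v" by (simp add: algebra_simps)
    then show "x \<in> {x \<in> box2 a u v. sg a u v x = 0}"
      using sg_pt[OF assms, of a 0 t] tu_pt[OF assms, of a 0 t] t by (simp add: box2_def)
  next
    fix x assume "x \<in> {x \<in> box2 a u v. sg a u v x = 0}"
    then have h: "sg a u v x = 0" "0 \<le> tu a u v x" "tu a u v x \<le> 1" by (auto simp: box2_def)
    have "x = a + tu a u v x *\<^sub>R v" using recon[OF assms, of a x] h by simp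
    also have "\<dots> = (1 - tu a u v x) *\<^sub>R a + tu a u v x *\<^sub>R (a + v)" by (simp add: algebra_simps)
    finally show "x \<in> closed_segment a (a + v)" using h by (auto simp: in_segment)
  qed
  have key: "p \<in> closed_segment a (a + v) \<and> q \<in> closed_segment a (a + v)"
    if p: "p \<in> box2 a u v" and q: "q \<in> box2 a u v" and x: "x \<in> closed_segment a (a + v)"
      and xo: "x \<in> open_segment p q" for p q x
  proof -
    obtain m where m: "0 < m" "m < 1" "x = (1 - m) *\<^sub>R p + m *\<^sub>R q" using xo by (auto simp: in_segment)
    have "sg a u v x = (1 - m) * sg a u v p + m * sg a u v q" using m(3) sg_comb[of "1 - m" m] by simp
    moreover have "sg a u v x = 0" using x seg by auto
    moreover have "0 \<le> sg a u v p" "0 \<le> sg a u v q" using p q by (auto simp: box2_def)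
    ultimately have "sg a u v p = 0 \<and> sg a u v q = 0" using m
      by (smt (verit) mult_pos_pos mult_nonneg_nonneg)
    then show ?thesis using seg p q by auto
  qed
  have face: "closed_segment a (a + v) face_of box2 a u v"
    unfolding face_of_def
  proof (intro conjI)
    show "closed_segment a (a + v) \<subseteq> box2 a u v" using seg by blast
    show "convex (closed_segment a (a + v))" by (rule convex_closed_segment)
    show "\<forall>p\<in>box2 a u v. \<forall>q\<in>box2 a u v. \<forall>x\<in>closed_segment a (a + v). x \<in> open_segment p q \<longrightarrow>
      p \<in> closed_segment a (a + v) \<and> q \<in> closed_segment a (a + v)" using key by blast
  qed
  have "aff_dim (closed_segment a (a + v)) = 1"
    unfolding segment_convex_hull aff_dim_convex_hull using v by simp
  then show "closed_segment a (a + v) facet_of (box2 a u v)"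
    unfolding facet_of_def using face aff_dim_box2[OF assms] by simp
  show "\<forall>x \<in> rel_interior (closed_segment a (a + v)). sg a u v x = 0 \<and> 0 < tu a u v x \<and> tu a u v x < 1"
  proof
    fix x assume "x \<in> rel_interior (closed_segment a (a + v))"
    then have "x \<in> open_segment a (a + v)" using v by (simp add: rel_interior_closed_segment)
    then obtain t where t: "0 < t" "t < 1" "x = (1 - t) *\<^sub>R a + t *\<^sub>R (a + v)" by (auto simp: in_segment)
    then have "x = a + 0 *\<^sub>R u + t *\<^sub>R v" by (simp add: algebra_simps)
    then show "sg a u v x = 0 \<and> 0 < tu a u v x \<and> tu a u v x < 1"
      using sg_pt[OF assms, of a 0 t] tu_pt[OF assms, of a 0 t] t by simp
  qed
qed



definition S4 :: "real \<Rightarrow> real \<Rightarrow> real \<Rightarrow> real \<Rightarrow> bool" where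
  "S4 al be ga de \<longleftrightarrow> (0 \<le> al \<and> 0 \<le> be \<and> 1 \<le> al + be \<or> al \<le> 0 \<and> be \<le> 0 \<and> al + be \<le> -1) \<and>
     (0 \<le> ga \<and> de \<le> 0 \<and> 1 \<le> ga - de \<or> ga \<le> 0 \<and> 0 \<le> de \<and> 1 \<le> de - ga)"

lemma corner:
  fixes f0 al be g0 ga de s1 t1 s2 t2 s3 t3 s4 t4 :: real
  assumes b: "s1 = 0 \<or> s1 = 1" "t1 = 0 \<or> t1 = 1" "s2 = 0 \<or> s2 = 1" "t2 = 0 \<or> t2 = 1"
     "s3 = 0 \<or> s3 = 1" "t3 = 0 \<or> t3 = 1" "s4 = 0 \<or> s4 = 1" "t4 = 0 \<or> t4 = 1"
  and h: "f0 + al * s1 + be * t1 = 0" "0 < g0 + ga * s1 + de * t1" "g0 + ga * s1 + de * t1 < 1"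
     "f0 + al * s3 + be * t3 = 1" "0 < g0 + ga * s3 + de * t3" "g0 + ga * s3 + de * t3 < 1"
     "g0 + ga * s2 + de * t2 = 0" "0 < f0 + al * s2 + be * t2" "f0 + al * s2 + be * t2 < 1"
     "g0 + ga * s4 + de * t4 = 1" "0 < f0 + al * s4 + be * t4" "f0 + al * s4 + be * t4 < 1"
  shows "\<bar>(s1 - s2) * (t3 - t2) - (s3 - s2) * (t1 - t2)\<bar> = 1 \<and> \<bar>(s2 - s1) * (t4 - t1) - (s4 - s1) * (t2 - t1)\<bar> = 1"
  using b h apply (elim disjE) apply simp_all done
lemma corner2:
  fixes f0 al be g0 ga de s1 t1 s2 t2 s3 t3 s4 t4 :: real
  assumes b: "s1 = 0 \<or> s1 = 1" "t1 = 0 \<or> t1 = 1" "s2 = 0 \<or> s2 = 1" "t2 = 0 \<or> t2 = 1"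
     "s3 = 0 \<or> s3 = 1" "t3 = 0 \<or> t3 = 1" "s4 = 0 \<or> s4 = 1" "t4 = 0 \<or> t4 = 1"
  and h: "f0 + al * s1 + be * t1 = 0" "0 < g0 + ga * s1 + de * t1" "g0 + ga * s1 + de * t1 < 1"
     "f0 + al * s3 + be * t3 = 1" "0 < g0 + ga * s3 + de * t3" "g0 + ga * s3 + de * t3 < 1"
     "g0 + ga * s2 + de * t2 = 0" "0 < f0 + al * s2 + be * t2" "f0 + al * s2 + be * t2 < 1"
     "g0 + ga * s4 + de * t4 = 1" "0 < f0 + al * s4 + be * t4" "f0 + al * s4 + be * t4 < 1"
  shows "S4 al be ga de \<or> S4 ga de al be"
  using b h unfolding S4_def apply (elim disjE) apply simp_all done
lemma same_sign:
  fixes a b p q :: real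
  assumes "0 \<le> a" "0 \<le> b" "1 \<le> a + b" "1 \<le> \<bar>p\<bar>" "1 \<le> \<bar>q\<bar>" "0 < p * q"
  shows "1 \<le> \<bar>a * p + b * q\<bar>"
proof (cases "0 < p")
  case True
  then have "0 < q" using assms(6) by (simp add: zero_less_mult_iff)
  then have "a * 1 \<le> a * p" "b * 1 \<le> b * q" using True assms by (auto intro!: mult_left_mono simp del: mult_1_right)
  then show ?thesis using assms by linarith
next
  case False
  then have "p < 0" "q < 0" using assms(6) by (auto simp: zero_less_mult_iff)
  have "1 \<le> -p" "1 \<le> -q" using \<open>p < 0\<close> \<open>q < 0\<close> assms by auto
  then have "a * 1 \<le> a * (-p)" "b * 1 \<le> b * (-q)" using assms(1,2) by (metis mult_left_mono)+
  then show ?thesis using assms by linarith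
qed

lemma edge_arith:
  fixes al be ga de p q :: real
  assumes "p \<in> \<int>" "q \<in> \<int>" "p * q \<noteq> 0" "S4 al be ga de"
  shows "1 \<le> \<bar>al * p + be * q\<bar> \<or> 1 \<le> \<bar>ga * p + de * q\<bar>"
proof -
  have p: "1 \<le> \<bar>p\<bar>" using assms(1,3) by (auto elim!: Ints_cases)
  have q: "1 \<le> \<bar>q\<bar>" using assms(2,3) by (auto elim!: Ints_cases)
  consider "0 < p * q" | "p * q < 0" using assms(3) by linarith
  then show ?thesis
  proof cases
    case 1
    have A: "0 \<le> al \<and> 0 \<le> be \<and> 1 \<le> al + be \<or> al \<le> 0 \<and> be \<le> 0 \<and> al + be \<le> -1"
      using assms(4) unfolding S4_def by blast
    then show ?thesis
    proof (elim conjE disjE)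
      assume "0 \<le> al" "0 \<le> be" "1 \<le> al + be"
      then show ?thesis using same_sign[of al be p q] p q 1 by simp
    next
      assume "al \<le> 0" "be \<le> 0" "al + be \<le> -1"
      then show ?thesis using same_sign[of "-al" "-be" p q] p q 1 by (simp add: abs_minus_commute algebra_simps)
    qed
  next
    case 2
    then have pq: "0 < p * (-q)" by simp
    have A: "0 \<le> ga \<and> de \<le> 0 \<and> 1 \<le> ga - de \<or> ga \<le> 0 \<and> 0 \<le> de \<and> 1 \<le> de - ga"
      using assms(4) unfolding S4_def by blast
    then show ?thesis
    proof (elim conjE disjE)
      assume "0 \<le> ga" "de \<le> 0" "1 \<le> ga - de"
      then show ?thesis using same_sign[of ga "-de" p "-q"] p q pq by simp
    next
      assume "ga \<le> 0" "0 \<le> de" "1 \<le> de - ga"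
      then show ?thesis using same_sign[of "-ga" "de" p "-q"] p q pq by (simp add: abs_minus_commute add.commute)
    qed
  qed
qed

lemma three_edges:
  fixes p1 q1 p2 q2 :: real
  assumes "p1 * q2 - p2 * q1 \<noteq> 0"
  shows "p1 * q1 \<noteq> 0 \<or> p2 * q2 \<noteq> 0 \<or> (p2 - p1) * (q2 - q1) \<noteq> 0"
  using assms by auto




lemma aff_ev: fixes c0 c1 :: real assumes "0 < c0"
  shows "eventually (\<lambda>e. 0 < c0 + c1 * e) (at_right 0)"
proof -
  have "((\<lambda>e. c0 + c1 * e) \<longlongrightarrow> c0 + c1 * 0) (at_right 0)"
    by (intro tendsto_intros)
  then show ?thesis using assms by (simp add: order_tendstoD(1))
qed

lemma max_case:
  fixes L :: "(real^2) set"
  assumes D: "cr u v \<noteq> 0" and L: "convex L" "box2 a u v \<subseteq> L" and x: "x \<in> L" "sg a u v x < 0"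
    and q1: "sg a u v q1 = 0" "0 < tu a u v q1" "tu a u v q1 < 1"
    and q3: "sg a u v q3 = 1" "0 < tu a u v q3" "tu a u v q3 < 1"
    and q2: "tu a u v q2 = 0" "0 < sg a u v q2" "sg a u v q2 < 1"
  shows "\<exists>t. q1 + t \<in> interior L \<and> q2 + t \<in> interior L \<and> q3 + t \<in> interior L"
proof -
  define sx where "sx = sg a u v x"
  define tx where "tx = tu a u v x"
  define k where "k = - 2 / sx"
  have k: "0 < k" "k * sx = -2" using x(2) by (simp_all add: k_def sx_def field_simps)
  let ?t1 = "tu a u v q1" and ?t3 = "tu a u v q3" and ?s2 = "sg a u v q2"
  have "eventually (\<lambda>e. 0 < e \<and> 0 < 1/2 + (-1) * e \<and> 0 < 1/2 + (-k) * e \<and> 0 < ?s2 + (-1) * e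
      \<and> 0 < (1 - ?t3) + (-1) * e \<and> 0 < ?t1 + (1 - k * tx) * e \<and> 0 < (1 - ?t1) + (- (1 - k * tx + k)) * e) (at_right 0)"
    using q1 q2 q3 by (intro eventually_conj aff_ev eventually_at_right_less) auto
  then obtain e where e: "0 < e" "0 < 1/2 + (-1) * e" "0 < 1/2 + (-k) * e" "0 < ?s2 + (-1) * e"
      "0 < (1 - ?t3) + (-1) * e" "0 < ?t1 + (1 - k * tx) * e" "0 < (1 - ?t1) + (- (1 - k * tx + k)) * e"
    using eventually_happens[of _ "at_right (0::real)"] by auto
  define l where "l = k * e"
  have l: "0 < l" "l < 1/2" using e k by (auto simp: l_def)
  define ps where "ps = e / (1 - l)"
  define pt where "pt = (?t1 + e - l * tx) / (1 - l)"
  define p where "p = a + ps *\<^sub>R u + pt *\<^sub>R v"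
  have sp: "sg a u v p = ps" "tu a u v p = pt" using sg_pt[OF D] tu_pt[OF D] by (simp_all add: p_def)
  have ps: "0 < ps" "ps < 1" using e l by (simp_all add: ps_def field_simps)
  have pt: "0 < pt" "pt < 1" using e l by (simp_all add: pt_def l_def field_simps algebra_simps)
  have pint: "p \<in> interior L"
    using interior_mono[OF L(2)] interior_box2[OF D] sp ps pt by (auto simp: obox2_def)
  define w where "w = (1 - l) *\<^sub>R p + l *\<^sub>R x"
  have sw: "sg a u v w = - e" "tu a u v w = ?t1 + e"
  proof -
    have lp: "(1 - l) * ps = e" unfolding ps_def using l by simp
    have lt: "(1 - l) * pt = ?t1 + e - l * tx" unfolding pt_def using l by simp
    have "sg a u v w = (1 - l) * ps + l * sx" unfolding w_def using sg_comb[of "1 - l" l] sp sx_def by simp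
    also have "\<dots> = e + e * (k * sx)" using lp by (simp add: l_def mult.commute mult.left_commute)
    finally show "sg a u v w = - e" using k by simp
    have "tu a u v w = (1 - l) * pt + l * tx" unfolding w_def using tu_comb[of "1 - l" l] sp tx_def by simp
    also have "\<dots> = ?t1 + e" using lt by simp
    finally show "tu a u v w = ?t1 + e" .
  qed
  have "p \<noteq> x" using sp ps x(2) by auto
  then have "w \<in> open_segment p x" using l unfolding w_def by (auto simp: in_segment)
  then have wint: "w \<in> interior L"
    using in_interior_closure_convex_segment[OF L(1) pint] x(1) closure_subset by blast
  have obL: "obox2 a u v \<subseteq> interior L" using interior_mono[OF L(2)] interior_box2[OF D] by simp
  have "q2 + (w - q1) \<in> obox2 a u v"
    using sg_add3[of a u v q2 w q1] tu_add3[of a u v q2 w q1] sw q1 q2 e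
    by (simp add: obox2_def add_diff_eq)
  moreover have "q3 + (w - q1) \<in> obox2 a u v"
    using sg_add3[of a u v q3 w q1] tu_add3[of a u v q3 w q1] sw q1 q3 e
    by (simp add: obox2_def add_diff_eq)
  ultimately show ?thesis using obL wint by (intro exI[of _ "w - q1"]) auto
qed




definition col :: "real^2^2 \<Rightarrow> 2 \<Rightarrow> real^2" where "col M j = M *v axis j 1"

lemma col_comp[simp]: "col M j $ i = M$i$j"
  unfolding col_def matrix_vector_mult_def by (simp add: sum_2 axis_def) (metis exhaust_2)?

lemma mv_comp: "((M::real^2^2) *v y) $ i = M$i$1 * y$1 + M$i$2 * y$2"
  unfolding matrix_vector_mult_def by (simp add: sum_2)

lemma mv_decomp: "(M::real^2^2) *v y = y$1 *\<^sub>R col M 1 + y$2 *\<^sub>R col M 2"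
  unfolding vec_eq_iff by (simp add: mv_comp algebra_simps)

lemma cr_lin: "cr (p *\<^sub>R x + q *\<^sub>R y) w = p * cr x w + q * cr y w"
  "cr w (p *\<^sub>R x + q *\<^sub>R y) = p * cr w x + q * cr w y"
  "cr (x - y) w = cr x w - cr y w" "cr w (x - y) = cr w x - cr w y"
  unfolding cr_def by (simp_all add: algebra_simps)

lemma cr_mv: "cr ((M::real^2^2) *v x) (M *v y) = det M * cr x y"
  unfolding cr_def det_2 mv_comp by (simp add: algebra_simps)

lemma cr_col: "cr (col M 1) (col M 2) = det M"
  unfolding cr_def det_2 by simp

lemma sg_img: "sg a u v (M *v y + b) = sg a u v b + y$1 * (cr (col M 1) v / cr u v) + y$2 * (cr (col M 2) v / cr u v)"
  using sg_tu_trans(1)[of a u v b "M *v y"] by (simp add: mv_decomp cr_lin add_divide_distrib add.commute)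
lemma tu_img: "tu a u v (M *v y + b) = tu a u v b + y$1 * (cr u (col M 1) / cr u v) + y$2 * (cr u (col M 2) / cr u v)"
  using sg_tu_trans(2)[of a u v b "M *v y"] by (simp add: mv_decomp cr_lin add_divide_distrib add.commute)

definition pc :: "real^2^2 \<Rightarrow> real^2 \<Rightarrow> real" where "pc M e = (M$2$2 * e$1 - M$1$2 * e$2) / det M"
definition qc :: "real^2^2 \<Rightarrow> real^2 \<Rightarrow> real" where "qc M e = (M$1$1 * e$2 - M$2$1 * e$1) / det M"

lemma decomp_aux: fixes m11 m12 m21 m22 e1 e2 d :: real
  assumes "d = m11 * m22 - m12 * m21" "d \<noteq> 0"
  shows "(m22 * e1 - m12 * e2) / d * m11 + (m11 * e2 - m21 * e1) / d * m12 = e1"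
    and "(m22 * e1 - m12 * e2) / d * m21 + (m11 * e2 - m21 * e1) / d * m22 = e2"
proof -
  have "(m22 * e1 - m12 * e2) / d * m11 + (m11 * e2 - m21 * e1) / d * m12
      = ((m22 * e1 - m12 * e2) * m11 + (m11 * e2 - m21 * e1) * m12) / d" by (simp add: add_divide_distrib)
  also have "(m22 * e1 - m12 * e2) * m11 + (m11 * e2 - m21 * e1) * m12 = e1 * d" unfolding assms(1) by algebra
  finally show "(m22 * e1 - m12 * e2) / d * m11 + (m11 * e2 - m21 * e1) / d * m12 = e1" using assms(2) by simp
  have "(m22 * e1 - m12 * e2) / d * m21 + (m11 * e2 - m21 * e1) / d * m22
      = ((m22 * e1 - m12 * e2) * m21 + (m11 * e2 - m21 * e1) * m22) / d" by (simp add: add_divide_distrib)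
  also have "(m22 * e1 - m12 * e2) * m21 + (m11 * e2 - m21 * e1) * m22 = e2 * d" unfolding assms(1) by algebra
  finally show "(m22 * e1 - m12 * e2) / d * m21 + (m11 * e2 - m21 * e1) / d * m22 = e2" using assms(2) by simp
qed

lemma pc_qc_decomp: assumes "det M \<noteq> 0" shows "e = pc M e *\<^sub>R col M 1 + qc M e *\<^sub>R col M 2"
proof -
  have d: "det M = M$1$1 * M$2$2 - M$1$2 * M$2$1" by (simp add: det_2)
  show ?thesis unfolding vec_eq_iff forall_2 pc_def qc_def
    using decomp_aux[OF d assms, of "e$1" "e$2"] by simp
qed

lemma pc_qc_int: assumes "\<forall>i j. M$i$j \<in> \<int>" "\<bar>det M\<bar> = 1" "e$1 \<in> \<int>" "e$2 \<in> \<int>"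
  shows "pc M e \<in> \<int>" "qc M e \<in> \<int>"
proof -
  have d: "det M = 1 \<or> det M = -1" using assms(2) by linarith
  have "M$2$2 * e$1 - M$1$2 * e$2 \<in> \<int>" "M$1$1 * e$2 - M$2$1 * e$1 \<in> \<int>"
    using assms by (intro Ints_diff Ints_mult; simp)+
  then show "pc M e \<in> \<int>" "qc M e \<in> \<int>" using d unfolding pc_def qc_def by (auto, (metis Ints_minus minus_diff_eq)+)
qed

lemma pc_qc_diff: "pc M (x - y) = pc M x - pc M y" "qc M (x - y) = qc M x - qc M y"
proof -
  have "M$2$2 * (x - y)$1 - M$1$2 * (x - y)$2 = (M$2$2 * x$1 - M$1$2 * x$2) - (M$2$2 * y$1 - M$1$2 * y$2)"
    "M$1$1 * (x - y)$2 - M$2$1 * (x - y)$1 = (M$1$1 * x$2 - M$2$1 * x$1) - (M$1$1 * y$2 - M$2$1 * y$1)"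
    by (simp_all add: algebra_simps)
  then show "pc M (x - y) = pc M x - pc M y" "qc M (x - y) = qc M x - qc M y"
    unfolding pc_def qc_def by (simp_all only: diff_divide_distrib)
qed

lemma img_hull: "(\<lambda>x. (M::real^2^2) *v x + b) ` (convex hull S) = convex hull ((\<lambda>x. M *v x + b) ` S)"
proof -
  have e: "(\<lambda>x. M *v x + b) = (\<lambda>x. b + x) \<circ> (\<lambda>x. M *v x)" by (rule ext) (simp add: add.commute)
  have "(\<lambda>x. b + x) ` ((\<lambda>x. M *v x) ` (convex hull S)) = convex hull ((\<lambda>x. b + x) ` ((\<lambda>x. M *v x) ` S))"
    by (simp add: convex_hull_linear_image convex_hull_translation)
  then show ?thesis unfolding e image_comp .
qed

lemma unit_square_hull: "unit_square = convex hull {0, axis 1 1, axis 1 1 + axis 2 1, axis 2 1}"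
proof -
  have c: "cr (axis 1 1) (axis 2 1) = 1" unfolding cr_def by (simp add: axis_def)
  have "box2 0 (axis 1 1) (axis 2 1) = unit_square"
    unfolding box2_def unit_square_def sg_def tu_def c mem_box_cart set_eq_iff
    by (simp add: cr_def axis_def forall_2)
  then show ?thesis using hull_box2[of "axis 1 1" "axis 2 1" 0] c by simp
qed

lemma ext_corner: assumes "q extreme_point_of ((\<lambda>x. (M::real^2^2) *v x + b) ` unit_square)"
  shows "\<exists>y. q = M *v y + b \<and> (y$1 = 0 \<or> y$1 = 1) \<and> (y$2 = 0 \<or> y$2 = 1)"
proof -
  have "q \<in> (\<lambda>x. M *v x + b) ` {0, axis 1 1, axis 1 1 + axis 2 1, axis 2 1}"
    using assms unfolding unit_square_hull img_hull by (rule extreme_point_of_convex_hull)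
  then obtain y where y: "y \<in> {0, axis 1 1, axis 1 1 + axis 2 1, axis 2 1}" "q = M *v y + b" by blast
  have "(y$1 = 0 \<or> y$1 = 1) \<and> (y$2 = 0 \<or> y$2 = 1)" using y(1) by (auto simp: axis_def)
  then show ?thesis using y(2) by blast
qed

lemma unimod_tri: assumes "w1$1 \<in> \<int>" "w1$2 \<in> \<int>" "w2$1 \<in> \<int>" "w2$2 \<in> \<int>" "\<bar>cr w1 w2\<bar> = 1"
  shows "\<exists>T. R_unimodular_map T \<and> T ` Delta2 = convex hull {c, c + w1, c + w2}"
proof -
  define N :: "real^2^2" where "N = (\<chi> i j. if j = 1 then w1$i else w2$i)"
  have Nc: "N$i$1 = w1$i" "N$i$2 = w2$i" for i by (simp_all add: N_def)
  have int: "\<forall>i j. N$i$j \<in> \<int>"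
  proof (intro allI)
    fix i j :: 2
    show "N$i$j \<in> \<int>" using assms exhaust_2[of i] exhaust_2[of j] by (auto simp: Nc)
  qed
  have "det N = cr w1 w2" unfolding det_2 cr_def Nc by (simp add: mult.commute)
  then have det: "\<bar>det N\<bar> = 1" using assms(5) by simp
  have m1: "N *v axis 1 1 = w1" and m2: "N *v axis 2 1 = w2" and m0: "N *v 0 = 0"
    unfolding vec_eq_iff forall_2 by (simp_all add: mv_comp Nc axis_def)
  have "(\<lambda>x. N *v x + c) ` Delta2 = convex hull {c, c + w1, c + w2}"
    unfolding Delta2_def img_hull by (simp add: m1 m2 m0 add.commute)
  moreover have "R_unimodular_map (\<lambda>x. N *v x + c)" unfolding R_unimodular_map_def using int det by blast
  ultimately show ?thesis by blast
qed




lemma cr_bil: "cr (p1 *\<^sub>R c1 + q1 *\<^sub>R c2) (p2 *\<^sub>R c1 + q2 *\<^sub>R c2) = (p1 * q2 - p2 * q1) * cr c1 c2"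
  unfolding cr_def by (simp add: algebra_simps)

lemma edge_contra:
  fixes M :: "real^2^2"
  assumes D: "cr u v \<noteq> 0" and X: "X \<in> obox2 a u v" "X + e \<in> obox2 a u v"
    and dM: "det M \<noteq> 0" and pq: "pc M e \<in> \<int>" "qc M e \<in> \<int>" "pc M e * qc M e \<noteq> 0"
    and S: "S4 (cr (col M 1) v / cr u v) (cr (col M 2) v / cr u v) (cr u (col M 1) / cr u v) (cr u (col M 2) / cr u v)
         \<or> S4 (cr u (col M 1) / cr u v) (cr u (col M 2) / cr u v) (cr (col M 1) v / cr u v) (cr (col M 2) v / cr u v)"
  shows False
proof -
  define p q where "p = pc M e" and "q = qc M e"
  define al be ga de where "al = cr (col M 1) v / cr u v" and "be = cr (col M 2) v / cr u v"
    and "ga = cr u (col M 1) / cr u v" and "de = cr u (col M 2) / cr u v"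
  have ed: "e = p *\<^sub>R col M 1 + q *\<^sub>R col M 2" using pc_qc_decomp[OF dM] p_def q_def by blast
  have s1: "cr e v / cr u v = al * p + be * q" unfolding ed cr_lin al_def be_def by (simp add: add_divide_distrib mult.commute)
  have s2: "cr u e / cr u v = ga * p + de * q" unfolding ed cr_lin ga_def de_def by (simp add: add_divide_distrib mult.commute)
  have "sg a u v (X + e) = sg a u v X + cr e v / cr u v" "tu a u v (X + e) = tu a u v X + cr u e / cr u v"
    by (rule sg_tu_trans)+
  then have b1: "\<bar>al * p + be * q\<bar> < 1" and b2: "\<bar>ga * p + de * q\<bar> < 1"
    using X unfolding obox2_def s1 s2 by auto
  have pqi: "p \<in> \<int>" "q \<in> \<int>" "p * q \<noteq> 0" using pq p_def q_def by auto
  from S have "S4 al be ga de \<or> S4 ga de al be" unfolding al_def be_def ga_def de_def .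
  then show False
  proof
    assume "S4 al be ga de"
    from edge_arith[OF pqi this] b1 b2 show False by linarith
  next
    assume "S4 ga de al be"
    from edge_arith[OF pqi this] b1 b2 show False by linarith
  qed
qed

lemma tri_contra:
  assumes L: "R_Delta2_free L" and w: "w1$1 \<in> \<int>" "w1$2 \<in> \<int>" "w2$1 \<in> \<int>" "w2$2 \<in> \<int>" "\<bar>cr w1 w2\<bar> = 1"
    and i: "c \<in> interior L" "c + w1 \<in> interior L" "c + w2 \<in> interior L"
  shows False
proof -
  obtain T where T: "R_unimodular_map T" "T ` Delta2 = convex hull {c, c + w1, c + w2}"
    using unimod_tri[OF w] by blast
  have cL: "convex L" using L unfolding R_Delta2_free_def by blast
  have "convex hull {c, c + w1, c + w2} \<subseteq> interior L"
    by (rule hull_minimal) (use i convex_interior[OF cL] in auto)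
  then have "T ` Delta2 \<subseteq> rel_interior L" using T(2) interior_subset_rel_interior by blast
  then show False using L T(1) unfolding R_Delta2_free_def by blast
qed

lemma int01: "(x::real) = 0 \<or> x = 1 \<Longrightarrow> x \<in> \<int>" by auto

lemma tri_corners:
  fixes M :: "real^2^2"
  assumes L: "R_Delta2_free L" and Mi: "\<forall>i j. M$i$j \<in> \<int>" "\<bar>det M\<bar> = 1"
    and yA: "yA$1 = 0 \<or> yA$1 = 1" "yA$2 = 0 \<or> yA$2 = 1"
    and yB: "yB$1 = 0 \<or> yB$1 = 1" "yB$2 = 0 \<or> yB$2 = 1"
    and yC: "yC$1 = 0 \<or> yC$1 = 1" "yC$2 = 0 \<or> yC$2 = 1"
    and d: "\<bar>(yA$1 - yB$1) * (yC$2 - yB$2) - (yC$1 - yB$1) * (yA$2 - yB$2)\<bar> = 1"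
    and i: "(M *v yA + b) + t \<in> interior L" "(M *v yB + b) + t \<in> interior L" "(M *v yC + b) + t \<in> interior L"
  shows False
proof -
  define w1 where "w1 = M *v (yA - yB)"
  define w2 where "w2 = M *v (yC - yB)"
  have ints: "(yA - yB)$1 \<in> \<int>" "(yA - yB)$2 \<in> \<int>" "(yC - yB)$1 \<in> \<int>" "(yC - yB)$2 \<in> \<int>"
  proof -
    have "yA$1 \<in> \<int>" "yA$2 \<in> \<int>" "yB$1 \<in> \<int>" "yB$2 \<in> \<int>" "yC$1 \<in> \<int>" "yC$2 \<in> \<int>"
      using yA yB yC int01 by blast+
    then show "(yA - yB)$1 \<in> \<int>" "(yA - yB)$2 \<in> \<int>" "(yC - yB)$1 \<in> \<int>" "(yC - yB)$2 \<in> \<int>"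
      by (simp_all add: Ints_diff)
  qed
  have wi: "w1$1 \<in> \<int>" "w1$2 \<in> \<int>" "w2$1 \<in> \<int>" "w2$2 \<in> \<int>"
    unfolding w1_def w2_def mv_comp using Mi(1) ints by (auto intro!: Ints_add Ints_mult)
  have "cr w1 w2 = det M * cr (yA - yB) (yC - yB)" unfolding w1_def w2_def by (rule cr_mv)
  also have "cr (yA - yB) (yC - yB) = (yA$1 - yB$1) * (yC$2 - yB$2) - (yC$1 - yB$1) * (yA$2 - yB$2)"
    unfolding cr_def by (simp add: mult.commute)
  finally have wc: "\<bar>cr w1 w2\<bar> = 1" using Mi(2) d by (simp add: abs_mult)
  have e1: "(M *v yB + b + t) + w1 = M *v yA + b + t" unfolding w1_def by (simp add: matrix_vector_right_distrib algebra_simps)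
  have e2: "(M *v yB + b + t) + w2 = M *v yC + b + t" unfolding w2_def by (simp add: matrix_vector_right_distrib algebra_simps)
  show False using tri_contra[OF L wi wc, of "M *v yB + b + t"] i unfolding e1 e2 by blast
qed




theorem proposition5p9:
  fixes P Q :: "(real^2) set"
  assumes "\<exists>T. R_unimodular_map T \<and> Q = T ` unit_square"
    and "parallelogram P"
    and "\<forall>F. F facet_of P \<longrightarrow>
           card {q. q extreme_point_of Q \<and> q \<in> rel_interior F} = 1"
    and "\<forall>F G q. F facet_of P \<and> G facet_of P \<and> q extreme_point_of Q \<and>
           q \<in> rel_interior F \<and> q \<in> rel_interior G \<longrightarrow> F = G"
  shows "maximal_R_Delta2_free P"
proof -
  obtain T where T: "R_unimodular_map T" "Q = T ` unit_square" using assms(1) by blast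
  obtain M :: "real^2^2" and b where Mi: "\<forall>i j. M$i$j \<in> \<int>" "\<bar>det M\<bar> = 1" and Tdef: "T = (\<lambda>x. M *v x + b)"
    using T(1) unfolding R_unimodular_map_def by blast
  have dM: "det M \<noteq> 0" using Mi(2) by auto
  obtain a u v where D0: "u$1 * v$2 - u$2 * v$1 \<noteq> 0" and Pdef: "P = convex hull {a, a + u, a + u + v, a + v}"
    using assms(2) unfolding parallelogram_def by blast
  have D: "cr u v \<noteq> 0" using D0 by (simp add: cr_def)
  have PB: "P = box2 a u v" using Pdef hull_box2[OF D] by simp
  have Qd: "Q = (\<lambda>x. M *v x + b) ` unit_square" using T Tdef by simp
  have getq: "\<exists>q. q extreme_point_of Q \<and> q \<in> rel_interior F" if "F facet_of P" for F
  proof -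
    have "card {q. q extreme_point_of Q \<and> q \<in> rel_interior F} = 1" using assms(3) that by blast
    then obtain q where "{q. q extreme_point_of Q \<and> q \<in> rel_interior F} = {q}" by (rule card_1_singletonE)
    then show ?thesis by blast
  qed
  have c1: "cr (-u) v \<noteq> 0" "cr v u \<noteq> 0" "cr (-v) u \<noteq> 0" using D unfolding cr_def by (simp_all add: algebra_simps)
  have br: "box2 (a + u) (-u) v = P" "box2 a v u = P" "box2 (a + v) (-v) u = P"
    using box2_reparams[OF D] PB by simp_all
  have corner_of: "\<exists>y. q = M *v y + b \<and> (y$1 = 0 \<or> y$1 = 1) \<and> (y$2 = 0 \<or> y$2 = 1)"
    if "q extreme_point_of Q" for q using ext_corner[of q M b] that Qd by simp
  obtain q1 where q1: "q1 extreme_point_of Q" "q1 \<in> rel_interior (closed_segment a (a + v))"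
    using getq facet0(1)[OF D, of a] PB by blast
  have q1p: "sg a u v q1 = 0" "0 < tu a u v q1" "tu a u v q1 < 1" using facet0(2)[OF D, of a] q1(2) by auto
  obtain q3 where q3: "q3 extreme_point_of Q" "q3 \<in> rel_interior (closed_segment (a + u) (a + u + v))"
  proof -
    have "closed_segment (a + u) (a + u + v) facet_of P" using facet0(1)[OF c1(1), of "a + u"] br by simp
    then show ?thesis using getq that by blast
  qed
  have "sg (a + u) (-u) v q3 = 0" "0 < tu (a + u) (-u) v q3" "tu (a + u) (-u) v q3 < 1"
    using facet0(2)[OF c1(1), of "a + u"] q3(2) by auto
  then have q3p: "sg a u v q3 = 1" "0 < tu a u v q3" "tu a u v q3 < 1"
    using reparam1(1)[OF D, of a q3] reparam1(2)[of a u v q3] by auto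
  obtain q2 where q2: "q2 extreme_point_of Q" "q2 \<in> rel_interior (closed_segment a (a + u))"
  proof -
    have "closed_segment a (a + u) facet_of P" using facet0(1)[OF c1(2), of a] br by simp
    then show ?thesis using getq that by blast
  qed
  have "sg a v u q2 = 0" "0 < tu a v u q2" "tu a v u q2 < 1"
    using facet0(2)[OF c1(2), of a] q2(2) by auto
  then have q2p: "tu a u v q2 = 0" "0 < sg a u v q2" "sg a u v q2 < 1"
    using reparam2[of a v u q2] by auto
  obtain q4 where q4: "q4 extreme_point_of Q" "q4 \<in> rel_interior (closed_segment (a + v) (a + v + u))"
  proof -
    have "closed_segment (a + v) (a + v + u) facet_of P" using facet0(1)[OF c1(3), of "a + v"] br by simp
    then show ?thesis using getq that by blast
  qed
  have "sg (a + v) (-v) u q4 = 0" "0 < tu (a + v) (-v) u q4" "tu (a + v) (-v) u q4 < 1"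
    using facet0(2)[OF c1(3), of "a + v"] q4(2) by auto
  then have q4p: "tu a u v q4 = 1" "0 < sg a u v q4" "sg a u v q4 < 1"
    using reparam3(1)[OF D, of a q4] reparam3(2)[of a v u q4] by auto
  obtain y1 where y1: "q1 = M *v y1 + b" "y1$1 = 0 \<or> y1$1 = 1" "y1$2 = 0 \<or> y1$2 = 1" using corner_of q1(1) by blast
  obtain y2 where y2: "q2 = M *v y2 + b" "y2$1 = 0 \<or> y2$1 = 1" "y2$2 = 0 \<or> y2$2 = 1" using corner_of q2(1) by blast
  obtain y3 where y3: "q3 = M *v y3 + b" "y3$1 = 0 \<or> y3$1 = 1" "y3$2 = 0 \<or> y3$2 = 1" using corner_of q3(1) by blast
  obtain y4 where y4: "q4 = M *v y4 + b" "y4$1 = 0 \<or> y4$1 = 1" "y4$2 = 0 \<or> y4$2 = 1" using corner_of q4(1) by blast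
  define al be ga de where "al = cr (col M 1) v / cr u v" and "be = cr (col M 2) v / cr u v"
    and "ga = cr u (col M 1) / cr u v" and "de = cr u (col M 2) / cr u v"
  define f0 g0 where "f0 = sg a u v b" and "g0 = tu a u v b"
  have sgy: "sg a u v (M *v y + b) = f0 + al * y$1 + be * y$2" for y
    unfolding sg_img f0_def al_def be_def by (simp add: mult.commute)
  have tuy: "tu a u v (M *v y + b) = g0 + ga * y$1 + de * y$2" for y
    unfolding tu_img g0_def ga_def de_def by (simp add: mult.commute)
  note hs = q1p[unfolded y1(1) sgy tuy] q2p[unfolded y2(1) sgy tuy] q3p[unfolded y3(1) sgy tuy] q4p[unfolded y4(1) sgy tuy]
  have dets: "\<bar>(y1$1 - y2$1) * (y3$2 - y2$2) - (y3$1 - y2$1) * (y1$2 - y2$2)\<bar> = 1 \<and>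
      \<bar>(y2$1 - y1$1) * (y4$2 - y1$2) - (y4$1 - y1$1) * (y2$2 - y1$2)\<bar> = 1"
    by (rule corner[of "y1$1" "y1$2" "y2$1" "y2$2" "y3$1" "y3$2" "y4$1" "y4$2" f0 al be g0 ga de])
      (use y1 y2 y3 y4 hs in auto)
  have S: "S4 al be ga de \<or> S4 ga de al be"
    by (rule corner2[of "y1$1" "y1$2" "y2$1" "y2$2" "y3$1" "y3$2" "y4$1" "y4$2" f0 al be g0 ga de])
      (use y1 y2 y3 y4 hs in auto)
  have relP: "rel_interior P = obox2 a u v" using rel_interior_box2[OF D] PB by simp
  have free: "R_Delta2_free P"
    unfolding R_Delta2_free_def
  proof (intro conjI notI)
    show "convex P" using Pdef by simp
    assume "\<exists>T. R_unimodular_map T \<and> T ` Delta2 \<subseteq> rel_interior P"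
    then obtain N :: "real^2^2" and c where Ni: "\<forall>i j. N$i$j \<in> \<int>" "\<bar>det N\<bar> = 1"
      and sub: "(\<lambda>x. N *v x + c) ` Delta2 \<subseteq> obox2 a u v"
      unfolding R_unimodular_map_def relP by blast
    have inD: "0 \<in> Delta2" "axis 1 1 \<in> Delta2" "axis 2 1 \<in> Delta2" unfolding Delta2_def by (auto intro: hull_inc)
    define e1 e2 where "e1 = col N 1" and "e2 = col N 2"
    have X0: "c \<in> obox2 a u v" using sub inD(1) by force
    have X1: "c + e1 \<in> obox2 a u v" using sub inD(2) unfolding e1_def col_def by (force simp: add.commute)
    have X2: "c + e2 \<in> obox2 a u v" using sub inD(3) unfolding e2_def col_def by (force simp: add.commute)
    have X2': "(c + e1) + (e2 - e1) \<in> obox2 a u v" using X2 by (simp add: algebra_simps)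
    have ei: "e1$1 \<in> \<int>" "e1$2 \<in> \<int>" "e2$1 \<in> \<int>" "e2$2 \<in> \<int>" using Ni(1) unfolding e1_def e2_def by simp_all
    then have ei': "(e2 - e1)$1 \<in> \<int>" "(e2 - e1)$2 \<in> \<int>" by (simp_all add: Ints_diff)
    define p1 r1 p2 r2 where "p1 = pc M e1" and "r1 = qc M e1" and "p2 = pc M e2" and "r2 = qc M e2"
    have pri: "p1 \<in> \<int>" "r1 \<in> \<int>" "p2 \<in> \<int>" "r2 \<in> \<int>"
      using pc_qc_int[OF Mi ei(1,2)] pc_qc_int[OF Mi ei(3,4)] p1_def r1_def p2_def r2_def by auto
    have "det N = cr e1 e2" unfolding e1_def e2_def by (simp add: cr_col)
    also have "cr e1 e2 = cr (p1 *\<^sub>R col M 1 + r1 *\<^sub>R col M 2) (p2 *\<^sub>R col M 1 + r2 *\<^sub>R col M 2)"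
      using pc_qc_decomp[OF dM, of e1] pc_qc_decomp[OF dM, of e2] p1_def r1_def p2_def r2_def by simp
    also have "\<dots> = (p1 * r2 - p2 * r1) * det M" by (simp add: cr_bil cr_col)
    finally have "p1 * r2 - p2 * r1 \<noteq> 0" using Ni(2) by auto
    have Sx: "S4 (cr (col M 1) v / cr u v) (cr (col M 2) v / cr u v) (cr u (col M 1) / cr u v) (cr u (col M 2) / cr u v)
         \<or> S4 (cr u (col M 1) / cr u v) (cr u (col M 2) / cr u v) (cr (col M 1) v / cr u v) (cr (col M 2) v / cr u v)"
      using S unfolding al_def be_def ga_def de_def .
    have three: "p1 * r1 \<noteq> 0 \<or> p2 * r2 \<noteq> 0 \<or> (p2 - p1) * (r2 - r1) \<noteq> 0" using \<open>p1 * r2 - p2 * r1 \<noteq> 0\<close> by (rule three_edges)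
    from three show False
    proof (elim disjE)
      assume "p1 * r1 \<noteq> 0"
      then show False using edge_contra[OF D X0 X1 dM _ _ _ Sx] pri p1_def r1_def by blast
    next
      assume "p2 * r2 \<noteq> 0"
      then show False using edge_contra[OF D X0 X2 dM _ _ _ Sx] pri p2_def r2_def by blast
    next
      assume "(p2 - p1) * (r2 - r1) \<noteq> 0"
      moreover have "pc M (e2 - e1) = p2 - p1" "qc M (e2 - e1) = r2 - r1"
        using pc_qc_diff p1_def r1_def p2_def r2_def by simp_all
      moreover have "p2 - p1 \<in> \<int>" "r2 - r1 \<in> \<int>" using pri by (simp_all add: Ints_diff)
      ultimately show False using edge_contra[OF D X1 X2' dM _ _ _ Sx] by simp
    qed
  qed
  have maxi: "R_Delta2_free L \<and> P \<subseteq> L \<longrightarrow> L = P" for L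
  proof
    assume H: "R_Delta2_free L \<and> P \<subseteq> L"
    show "L = P"
    proof (rule ccontr)
      assume "L \<noteq> P"
      then obtain x where x: "x \<in> L" "x \<notin> P" using H by blast
      have HL: "R_Delta2_free L" using H by blast
      have cL: "convex L" using H unfolding R_Delta2_free_def by blast
      have PL: "box2 a u v \<subseteq> L" using H PB by simp
      have d1: "\<bar>(y1$1 - y2$1) * (y3$2 - y2$2) - (y3$1 - y2$1) * (y1$2 - y2$2)\<bar> = 1" using dets by blast
      have d2: "\<bar>(y2$1 - y1$1) * (y4$2 - y1$2) - (y4$1 - y1$1) * (y2$2 - y1$2)\<bar> = 1" using dets by blast
      have d1': "\<bar>(y3$1 - y2$1) * (y1$2 - y2$2) - (y1$1 - y2$1) * (y3$2 - y2$2)\<bar> = 1"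
      proof -
        have "(y3$1 - y2$1) * (y1$2 - y2$2) - (y1$1 - y2$1) * (y3$2 - y2$2)
          = - ((y1$1 - y2$1) * (y3$2 - y2$2) - (y3$1 - y2$1) * (y1$2 - y2$2))" by algebra
        then show ?thesis using d1 by simp
      qed
      have d2': "\<bar>(y4$1 - y1$1) * (y2$2 - y1$2) - (y2$1 - y1$1) * (y4$2 - y1$2)\<bar> = 1"
      proof -
        have "(y4$1 - y1$1) * (y2$2 - y1$2) - (y2$1 - y1$1) * (y4$2 - y1$2)
          = - ((y2$1 - y1$1) * (y4$2 - y1$2) - (y4$1 - y1$1) * (y2$2 - y1$2))" by algebra
        then show ?thesis using d2 by simp
      qed
      from x(2) have "sg a u v x < 0 \<or> 1 < sg a u v x \<or> tu a u v x < 0 \<or> 1 < tu a u v x"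
        unfolding PB box2_def by auto
      then show False
      proof (elim disjE)
        assume xs: "sg a u v x < 0"
        obtain t where t: "q1 + t \<in> interior L" "q2 + t \<in> interior L" "q3 + t \<in> interior L"
          using max_case[OF D cL PL x(1) xs q1p q3p q2p] by blast
        show False using tri_corners[OF HL Mi y1(2,3) y2(2,3) y3(2,3) d1, of b t] t y1(1) y2(1) y3(1) by simp
      next
        assume xs: "1 < sg a u v x"
        have m1: "box2 (a + u) (-u) v \<subseteq> L" using br(1) H by simp
        have rr: "sg (a + u) (-u) v z = 1 - sg a u v z" "tu (a + u) (-u) v z = tu a u v z" for z
          using reparam1(1)[OF D, of a z] reparam1(2)[of a u v z] by simp_all
        have m2: "sg (a + u) (-u) v x < 0" using xs rr by simp
        have r3: "sg (a + u) (-u) v q3 = 0" "0 < tu (a + u) (-u) v q3" "tu (a + u) (-u) v q3 < 1" using q3p rr by simp_all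
        have r1: "sg (a + u) (-u) v q1 = 1" "0 < tu (a + u) (-u) v q1" "tu (a + u) (-u) v q1 < 1" using q1p rr by simp_all
        have r2: "tu (a + u) (-u) v q2 = 0" "0 < sg (a + u) (-u) v q2" "sg (a + u) (-u) v q2 < 1" using q2p rr by simp_all
        obtain t where t: "q3 + t \<in> interior L" "q2 + t \<in> interior L" "q1 + t \<in> interior L"
          using max_case[OF c1(1) cL m1 x(1) m2 r3 r1 r2] by blast
        show False using tri_corners[OF HL Mi y3(2,3) y2(2,3) y1(2,3) d1', of b t] t y1(1) y2(1) y3(1) by simp
      next
        assume xs: "tu a u v x < 0"
        have m1: "box2 a v u \<subseteq> L" using br(2) H by simp
        have rr: "sg a v u z = tu a u v z" "tu a v u z = sg a u v z" for z
          using reparam2[of a v u z] by simp_all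
        have m2: "sg a v u x < 0" using xs rr by simp
        have r3: "sg a v u q2 = 0" "0 < tu a v u q2" "tu a v u q2 < 1" using q2p rr by simp_all
        have r1: "sg a v u q4 = 1" "0 < tu a v u q4" "tu a v u q4 < 1" using q4p rr by simp_all
        have r2: "tu a v u q1 = 0" "0 < sg a v u q1" "sg a v u q1 < 1" using q1p rr by simp_all
        obtain t where t: "q2 + t \<in> interior L" "q1 + t \<in> interior L" "q4 + t \<in> interior L"
          using max_case[OF c1(2) cL m1 x(1) m2 r3 r1 r2] by blast
        show False using tri_corners[OF HL Mi y2(2,3) y1(2,3) y4(2,3) d2, of b t] t y1(1) y2(1) y4(1) by simp
      next
        assume xs: "1 < tu a u v x"
        have m1: "box2 (a + v) (-v) u \<subseteq> L" using br(3) H by simp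
        have rr: "sg (a + v) (-v) u z = 1 - tu a u v z" "tu (a + v) (-v) u z = sg a u v z" for z
          using reparam3(1)[OF D, of a z] reparam3(2)[of a v u z] by simp_all
        have m2: "sg (a + v) (-v) u x < 0" using xs rr by simp
        have r3: "sg (a + v) (-v) u q4 = 0" "0 < tu (a + v) (-v) u q4" "tu (a + v) (-v) u q4 < 1" using q4p rr by simp_all
        have r1: "sg (a + v) (-v) u q2 = 1" "0 < tu (a + v) (-v) u q2" "tu (a + v) (-v) u q2 < 1" using q2p rr by simp_all
        have r2: "tu (a + v) (-v) u q1 = 0" "0 < sg (a + v) (-v) u q1" "sg (a + v) (-v) u q1 < 1" using q1p rr by simp_all
        obtain t where t: "q4 + t \<in> interior L" "q1 + t \<in> interior L" "q2 + t \<in> interior L"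
          using max_case[OF c1(3) cL m1 x(1) m2 r3 r1 r2] by blast
        show False using tri_corners[OF HL Mi y4(2,3) y1(2,3) y2(2,3) d2', of b t] t y1(1) y2(1) y4(1) by simp
      qed
    qed
  qed
  show ?thesis unfolding maximal_R_Delta2_free_def using free maxi by blast
qed


end
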